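(* Let $P$ and $Q$ be two probability distributions on a finite set $\mathcal{A}$ that are positive on $\mathcal{A}$. Then $$\min_{x\in\mathcal{A}}\frac{P(x)}{Q(x)}\cdot D(Q\|P)\;\le\;\log\bigl(1+\chi^2(P,Q)\bigr)-D(P\|Q)\;\le\;\max_{x\in\mathcal{A}}\frac{P(x)}{Q(x)}\cdot D(Q\|P).$$
   Context: $D(P\|Q)=\sum_{x\in\mathcal{A}}P(x)\log\frac{P(x)}{Q(x)}$ is the relative entropy (natural logarithm), and $\chi^2(P,Q)=\sum_{x\in\mathcal{A}}\frac{(P(x)-Q(x))^2}{Q(x)}$ is the chi-squared divergence. *)

theory Defs
  imports Complex_Main
begin

definition rel_entropy :: "'a set \<Rightarrow> ('a \<Rightarrow> real) \<Rightarrow> ('a \<Rightarrow> real) \<Rightarrow> real" where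
  "rel_entropy A P Q = (\<Sum>x\<in>A. P x * ln (P x / Q x))"

definition chi_sq :: "'a set \<Rightarrow> ('a \<Rightarrow> real) \<Rightarrow> ('a \<Rightarrow> real) \<Rightarrow> real" where
  "chi_sq A P Q = (\<Sum>x\<in>A. (P x - Q x)^2 / Q x)"

end

theory Submission
  imports Defs
begin

lemma phi_nonneg: "(t::real) > 0 \<Longrightarrow> 0 \<le> t - 1 - ln t"
  using ln_le_minus_one[of t] by simp

theorem corollary1:
  fixes A :: "'a set" and P Q :: "'a \<Rightarrow> real"
  assumes "finite A"
    and "\<And>x. x \<in> A \<Longrightarrow> P x > 0" and "\<And>x. x \<in> A \<Longrightarrow> Q x > 0"
    and "(\<Sum>x\<in>A. P x) = 1" and "(\<Sum>x\<in>A. Q x) = 1"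
  shows "(MIN x\<in>A. P x / Q x) * rel_entropy A Q P
           \<le> ln (1 + chi_sq A P Q) - rel_entropy A P Q
         \<and> ln (1 + chi_sq A P Q) - rel_entropy A P Q
           \<le> (MAX x\<in>A. P x / Q x) * rel_entropy A Q P"
proof -
  note fin = assms(1) and Pp = assms(2) and Qp = assms(3)
  define r where "r x = P x / Q x" for x
  define c where "c = (\<Sum>x\<in>A. P x * r x)"
  define m where "m = (MIN x\<in>A. P x / Q x)"
  define M where "M = (MAX x\<in>A. P x / Q x)"
  have ne: "A \<noteq> {}" using assms(4) by auto
  have rp: "x \<in> A \<Longrightarrow> r x > 0" for x using Pp Qp r_def by simp
  have PrQ: "x \<in> A \<Longrightarrow> P x = r x * Q x" for x using Qp[of x] r_def by simp
  have mle: "x \<in> A \<Longrightarrow> m \<le> r x" for x unfolding m_def r_def using fin by (simp add: Min_le)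
  have Mge: "x \<in> A \<Longrightarrow> r x \<le> M" for x unfolding M_def r_def using fin by (simp add: Max_ge)
  have m0: "m > 0" unfolding m_def using fin ne Pp Qp by (simp add: Min_gr_iff)
  have chi: "1 + chi_sq A P Q = c"
  proof -
    have "chi_sq A P Q = (\<Sum>x\<in>A. P x * r x - 2 * P x + Q x)"
      unfolding chi_sq_def r_def
      by (rule sum.cong) (auto simp: field_simps power2_eq_square dest: Qp)
    also have "\<dots> = c - 2 + 1" unfolding c_def
      by (simp add: sum.distrib sum_subtractf sum_distrib_left[symmetric] assms(4,5))
    finally show ?thesis by simp
  qed
  have cpos: "c > 0" unfolding c_def using fin ne Pp rp
    by (intro sum_pos) auto
  have DPQ: "rel_entropy A P Q = (\<Sum>x\<in>A. P x * ln (r x))"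
    unfolding rel_entropy_def r_def by simp
  have DQP: "rel_entropy A Q P = - (\<Sum>x\<in>A. Q x * ln (r x))"
    unfolding rel_entropy_def r_def sum_negf[symmetric]
    by (rule sum.cong) (auto simp: ln_div algebra_simps dest: Pp Qp)
  define mid where "mid = ln c - (\<Sum>x\<in>A. P x * ln (r x))"
  have sQr: "(\<Sum>x\<in>A. Q x * r x) = 1" using assms(4) PrQ
    by (metis (no_types, lifting) mult.commute sum.cong)
  have sPk: "(\<Sum>x\<in>A. P x * k) = k" for k
    by (simp add: sum_distrib_right[symmetric] assms(4))
  have sQk: "(\<Sum>x\<in>A. Q x * k) = k" for k
    by (simp add: sum_distrib_right[symmetric] assms(5))
  have mid_eq: "mid = (\<Sum>x\<in>A. P x * (r x / c - 1 - ln (r x) + ln c))"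
    unfolding mid_def using cpos
    by (simp add: algebra_simps sum.distrib sum_subtractf sum_distrib_left[symmetric]
        sum_divide_distrib[symmetric] c_def[symmetric] assms(4) sPk)
  have "(\<Sum>x\<in>A. m * (Q x * (r x / c - 1 - ln (r x) + ln c)))
        \<le> (\<Sum>x\<in>A. P x * (r x / c - 1 - ln (r x) + ln c))"
  proof (rule sum_mono)
    fix x assume x: "x \<in> A"
    have ph: "0 \<le> r x / c - 1 - ln (r x / c)" using phi_nonneg[of "r x / c"] rp[OF x] cpos by simp
    have "ln (r x / c) = ln (r x) - ln c" using rp[OF x] cpos by (simp add: ln_div)
    then have ph': "0 \<le> r x / c - 1 - ln (r x) + ln c" using ph by simp
    have "m * Q x \<le> P x" using PrQ[OF x] mle[OF x] Qp[OF x] by (simp add: mult_right_mono)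
    then show "m * (Q x * (r x / c - 1 - ln (r x) + ln c)) \<le> P x * (r x / c - 1 - ln (r x) + ln c)"
      using mult_right_mono[OF _ ph'] by (simp add: mult.assoc[symmetric])
  qed
  moreover have "(\<Sum>x\<in>A. m * (Q x * (r x / c - 1 - ln (r x) + ln c)))
      = m * ((1/c - 1 + ln c) + rel_entropy A Q P)"
    unfolding DQP using cpos
    by (simp add: algebra_simps sum.distrib sum_subtractf sum_distrib_left[symmetric]
        sum_divide_distrib[symmetric] sQr assms(5) sQk)
  moreover have "0 \<le> 1/c - 1 + ln c" using phi_nonneg[of "1/c"] cpos by (simp add: ln_div)
  ultimately have low: "m * rel_entropy A Q P \<le> mid" using mid_eq m0
    by (smt (verit) mult_left_mono)
  have "mid \<le> c - 1 - (\<Sum>x\<in>A. P x * ln (r x))"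
    unfolding mid_def using ln_le_minus_one[OF cpos] by simp
  also have "\<dots> = (\<Sum>x\<in>A. P x * (r x - 1 - ln (r x)))"
    by (simp add: algebra_simps sum_subtractf sum.distrib c_def assms(4))
  also have "\<dots> \<le> (\<Sum>x\<in>A. M * (Q x * (r x - 1 - ln (r x))))"
  proof (rule sum_mono)
    fix x assume x: "x \<in> A"
    have ph: "0 \<le> r x - 1 - ln (r x)" using phi_nonneg rp[OF x] by simp
    have "P x \<le> M * Q x" using PrQ[OF x] Mge[OF x] Qp[OF x] by (simp add: mult_right_mono)
    then show "P x * (r x - 1 - ln (r x)) \<le> M * (Q x * (r x - 1 - ln (r x)))"
      using mult_right_mono[OF _ ph] by (simp add: mult.assoc[symmetric])
  qed
  also have "\<dots> = M * rel_entropy A Q P"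
    unfolding DQP
    by (simp add: algebra_simps sum_subtractf sum.distrib sum_distrib_left[symmetric] sQr assms(5))
  finally have up: "mid \<le> M * rel_entropy A Q P" .
  show ?thesis using low up unfolding mid_def m_def M_def chi DPQ by simp
qed

end
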